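(* Let $(\mu_n)_{n\ge0}$ be a non-increasing sequence of positive numbers such that $\sum_{n=0}^\infty\mu_n<\infty$. Then the restrictions $H^1_\mu:\ell^1_A\to\ell^1_A$ and $C^1_\mu:\ell^1_A\to\ell^1_A$ of $H_\mu$ and $C_\mu$ are nuclear operators. Moreover, the operator $H_\mu:\ell^\infty_A\to\ell^\infty_A$ satisfies $H_\mu=(H^1_\mu)^*$ and is a compact operator.
   Context: $\ell^p_A$ ($1\le p<\infty$) is the space of $f(z)=\sum_{n\ge0}a_nz^n\in H(\mathbb{D})$ with $\|f\|_p^p=\sum_n|a_n|^p<\infty$, and $\ell^\infty_A$ those with $\|f\|_\infty=\sup_n|a_n|<\infty$; functions are identified with coefficient sequences, so $\ell^\infty_A=(\ell^1_A)^*$ via $\langle x,y\rangle=\sum_nx_ny_n$. $H_\mu:\ell^\infty_A\to\ell^\infty_A$, $H_\mu((a_n)_{n\ge0})=\left(\sum_{n=0}^\infty\mu_{n+k}a_n\right)_{k\ge0}$ and $C_\mu:\ell^\infty_A\to\ell^\infty_A$, $C_\mu((a_n)_{n\ge0})=\left(\mu_k\sum_{n=0}^ka_n\right)_{k\ge0}$. An operator $T:X\to Y$ is nuclear if $T=\sum_nx_n^*(\cdot)y_n$ with $x_n^*\in X^*$, $y_n\in Y$, $\sum_n\|x_n^*\|\|y_n\|<\infty$. *)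

theory Defs
  imports "HOL-Analysis.Analysis"
begin

text \<open>Elements of the spaces are identified with their coefficient sequences.\<close>

definition ell1 :: "(nat \<Rightarrow> complex) set" where
  "ell1 = {a. summable (\<lambda>n. norm (a n))}"

definition norm1 :: "(nat \<Rightarrow> complex) \<Rightarrow> real" where
  "norm1 a = (\<Sum>n. norm (a n))"

definition ellinf :: "(nat \<Rightarrow> complex) set" where
  "ellinf = {a. bounded (range a)}"

definition norminf :: "(nat \<Rightarrow> complex) \<Rightarrow> real" where
  "norminf a = (SUP n. norm (a n))"

definition pairing :: "(nat \<Rightarrow> complex) \<Rightarrow> (nat \<Rightarrow> complex) \<Rightarrow> complex" where
  "pairing x y = (\<Sum>n. x n * y n)"

definition Hmu :: "(nat \<Rightarrow> real) \<Rightarrow> (nat \<Rightarrow> complex) \<Rightarrow> (nat \<Rightarrow> complex)" where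
  "Hmu \<mu> a = (\<lambda>k. \<Sum>n. complex_of_real (\<mu> (n + k)) * a n)"

definition Cmu :: "(nat \<Rightarrow> real) \<Rightarrow> (nat \<Rightarrow> complex) \<Rightarrow> (nat \<Rightarrow> complex)" where
  "Cmu \<mu> a = (\<lambda>k. complex_of_real (\<mu> k) * (\<Sum>n\<le>k. a n))"

text \<open>Nuclear operator ell1 -> ell1: T = sum_n x_n^*(.) y_n with x_n^* in (ell1)^* = ellinf
  (acting via the pairing), y_n in ell1, and sum ||x_n^*|| ||y_n|| < infinity;
  the series converges in the ell1 norm.\<close>
definition nuclear_ell1 :: "((nat \<Rightarrow> complex) \<Rightarrow> (nat \<Rightarrow> complex)) \<Rightarrow> bool" where
  "nuclear_ell1 T \<longleftrightarrow>
    (\<exists>xs ys :: nat \<Rightarrow> nat \<Rightarrow> complex.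
       (\<forall>n. xs n \<in> ellinf \<and> ys n \<in> ell1) \<and>
       summable (\<lambda>n. norminf (xs n) * norm1 (ys n)) \<and>
       (\<forall>x\<in>ell1. T x \<in> ell1 \<and>
          (\<lambda>N. norm1 (\<lambda>k. T x k - (\<Sum>n<N. pairing x (xs n) * ys n k))) \<longlonglongrightarrow> 0))"

definition compact_ellinf :: "((nat \<Rightarrow> complex) \<Rightarrow> (nat \<Rightarrow> complex)) \<Rightarrow> bool" where
  "compact_ellinf T \<longleftrightarrow>
    (\<forall>a\<in>ellinf. T a \<in> ellinf) \<and>
    (\<forall>a\<in>ellinf. \<forall>b\<in>ellinf. \<forall>c::complex.
        T (\<lambda>k. a k + b k) = (\<lambda>k. T a k + T b k) \<and> T (\<lambda>k. c * a k) = (\<lambda>k. c * T a k)) \<and>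
    (\<forall>x :: nat \<Rightarrow> nat \<Rightarrow> complex. (\<forall>n. x n \<in> ellinf \<and> norminf (x n) \<le> 1) \<longrightarrow>
       (\<exists>r y. strict_mono r \<and> y \<in> ellinf \<and>
          (\<lambda>n. norminf (\<lambda>k. T (x (r n)) k - y k)) \<longlonglongrightarrow> 0))"

end

theory Submission
  imports Defs "HOL-Analysis.Analysis"
begin

lemma ellinf_le: "a \<in> ellinf \<Longrightarrow> norm (a n) \<le> norminf a"
  unfolding ellinf_def norminf_def
  by (intro cSUP_upper) (auto simp: bounded_iff bdd_above_def)

lemma norminf_le: "(\<And>n. norm (a n) \<le> M) \<Longrightarrow> norminf a \<le> M"
  unfolding norminf_def by (intro cSUP_least) auto

lemma ellinfI: "(\<And>n. norm (a n) \<le> M) \<Longrightarrow> a \<in> ellinf"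
  unfolding ellinf_def bounded_iff by auto

lemma norminf_nonneg: "a \<in> ellinf \<Longrightarrow> 0 \<le> norminf a"
  using ellinf_le[of a 0] norm_ge_zero order_trans by blast

lemma pair_summable:
  assumes "x \<in> ell1" "\<And>n. norm (b n) \<le> M"
  shows "summable (\<lambda>n. norm (x n * b n))"
proof -
  have "summable (\<lambda>n. norm (x n) * M)" using assms(1) unfolding ell1_def by (auto intro: summable_mult2)
  then show ?thesis
    by (rule summable_comparison_test'[where N=0]) (auto simp: norm_mult intro: mult_left_mono assms(2))
qed

lemma pair_bound:
  assumes "x \<in> ell1" "\<And>n. norm (b n) \<le> M"
  shows "norm (pairing x b) \<le> M * norm1 x"
proof -
  have s: "summable (\<lambda>n. norm (x n) * M)" using assms(1) unfolding ell1_def by (auto intro: summable_mult2)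
  have "norm (pairing x b) \<le> (\<Sum>n. norm (x n * b n))"
    unfolding pairing_def by (rule summable_norm[OF pair_summable[OF assms]])
  also have "\<dots> \<le> (\<Sum>n. norm (x n) * M)"
    by (intro suminf_le pair_summable[OF assms] s) (auto simp: norm_mult intro: mult_left_mono assms(2))
  also have "\<dots> = norm1 x * M" unfolding norm1_def
    using assms(1) unfolding ell1_def by (intro suminf_mult2[symmetric]) simp
  also have "\<dots> = M * norm1 x" by simp
  finally show ?thesis .
qed

lemma nuclear_rows:
  assumes r: "\<And>k. r k \<in> ellinf" and sr: "summable (\<lambda>k. norminf (r k))"
    and T: "\<And>x k. x \<in> ell1 \<Longrightarrow> T x k = pairing x (r k)"
  shows "nuclear_ell1 T"
proof -
  define e :: "nat \<Rightarrow> nat \<Rightarrow> complex" where "e = (\<lambda>n j. if j = n then (1::complex) else 0)"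
  have n1: "norm1 (e n) = 1" for n
    unfolding norm1_def e_def using sums_single[of n "\<lambda>_. 1::real"] by (simp add: sums_iff if_distrib cong: if_cong)
  have e1: "e n \<in> ell1" for n
    unfolding ell1_def e_def using sums_single[of n "\<lambda>_. 1::real"] by (simp add: sums_iff if_distrib cong: if_cong)
  have s1: "summable (\<lambda>n. norminf (r n) * norm1 (e n))"
    using sr by (simp add: n1)
  have main: "T x \<in> ell1 \<and> (\<lambda>N. norm1 (\<lambda>k. T x k - (\<Sum>n<N. pairing x (r n) * e n k))) \<longlonglongrightarrow> 0"
    if x: "x \<in> ell1" for x
  proof
    have b: "norm (T x k) \<le> norminf (r k) * norm1 x" for k
      unfolding T[OF x] by (rule pair_bound[OF x]) (rule ellinf_le[OF r])
    have sT: "summable (\<lambda>k. norm (T x k))"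
      by (rule summable_comparison_test'[where N=0, OF summable_mult2[OF sr]]) (use b in auto)
    then show "T x \<in> ell1" unfolding ell1_def by simp
    have eq: "(\<lambda>k. T x k - (\<Sum>n<N. pairing x (r n) * e n k)) =
          (\<lambda>k. if k \<in> {..<N} then 0 else T x k)" for N
      by (auto simp: e_def T[OF x, symmetric] if_distrib cong: if_cong)
    have "(\<lambda>k. if k \<in> {..<N} then 0 else norm (T x k)) sums ((\<Sum>k. norm (T x k)) - (\<Sum>k<N. norm (T x k)))" for N
      by (intro sums_If_finite_set'[OF summable_sums[OF sT]]) (auto simp: sum_negf)
    then have "norm1 (\<lambda>k. T x k - (\<Sum>n<N. pairing x (r n) * e n k)) =
       (\<Sum>k. norm (T x k)) - (\<Sum>k<N. norm (T x k))" for N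
      unfolding eq norm1_def by (simp add: sums_iff if_distrib cong: if_cong)
    moreover have "(\<lambda>N. (\<Sum>k. norm (T x k)) - (\<Sum>k<N. norm (T x k))) \<longlonglongrightarrow> 0"
      using tendsto_diff[OF tendsto_const[of "\<Sum>k. norm (T x k)"] summable_LIMSEQ[OF sT]] by simp
    ultimately show "(\<lambda>N. norm1 (\<lambda>k. T x k - (\<Sum>n<N. pairing x (r n) * e n k))) \<longlonglongrightarrow> 0"
      by simp
  qed
  show ?thesis unfolding nuclear_ell1_def
    using r e1 s1 main by (intro exI[of _ r] exI[of _ e]) auto
qed

lemma subseq_pointwise:
  fixes f :: "nat \<Rightarrow> nat \<Rightarrow> complex" and t :: "nat \<Rightarrow> real"
  assumes b: "\<And>n k. norm (f n k) \<le> t k"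
  shows "\<exists>r y. strict_mono r \<and> (\<forall>k. norm (y k) \<le> t k) \<and> (\<forall>k. (\<lambda>n. f (r n) k) \<longlonglongrightarrow> y k)"
proof -
  define S where "S = PiE (UNIV::nat set) (\<lambda>k. cball (0::complex) (t k))"
  have "compactin (product_topology (\<lambda>i. euclidean) UNIV) S"
    unfolding S_def compactin_PiE by auto
  then have "compact S" by (simp add: euclidean_product_topology)
  then have "seq_compact S" by (rule compact_imp_seq_compact)
  moreover have "\<forall>n. f n \<in> S" using b by (auto simp: S_def)
  ultimately obtain l r where l: "l \<in> S" "strict_mono r" "(f \<circ> r) \<longlonglongrightarrow> l"
    unfolding seq_compact_def by meson
  have "(\<lambda>n. (f \<circ> r) n k) \<longlonglongrightarrow> l k" for k
    using continuous_on_tendsto_compose[OF continuous_on_product_coordinates[of k] l(3)] by simp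
  then show ?thesis using l by (intro exI[of _ r] exI[of _ l]) (auto simp: S_def)
qed

lemma infsum_nat_suminf:
  fixes f :: "nat \<Rightarrow> 'a::banach"
  assumes "summable (\<lambda>n. norm (f n))"
  shows "infsum f UNIV = suminf f"
  by (rule infsumI[OF norm_summable_imp_has_sum[OF assms summable_sums[OF summable_norm_cancel[OF assms]]]])

lemma suminf_swap_nat:
  fixes F :: "nat \<Rightarrow> nat \<Rightarrow> complex"
  assumes a1: "\<And>n. summable (\<lambda>k. norm (F n k))" and a2: "summable (\<lambda>n. \<Sum>k. norm (F n k))"
    and a3: "\<And>k. summable (\<lambda>n. norm (F n k))"
    and a4: "summable (\<lambda>k. norm (\<Sum>n. F n k))" and a5: "summable (\<lambda>n. norm (\<Sum>k. F n k))"
  shows "(\<Sum>n. \<Sum>k. F n k) = (\<Sum>k. \<Sum>n. F n k)"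
proof -
  have nn: "summable (\<lambda>k. norm (norm (F n k)))" for n using a1 by simp
  have i1: "infsum (\<lambda>k. norm (F n k)) UNIV = (\<Sum>k. norm (F n k))" for n
    by (rule infsum_nat_suminf[OF nn])
  have s1: "(\<lambda>k. norm (F n k)) summable_on UNIV" for n
    using norm_summable_imp_summable_on[OF nn[of n]] by simp
  have "summable (\<lambda>n. norm (norm (\<Sum>k. norm (F n k))))"
    using a2 by (simp add: suminf_nonneg[OF a1])
  then have "(\<lambda>n. norm (\<Sum>k. norm (F n k))) summable_on UNIV" by (rule norm_summable_imp_summable_on)
  then have s2: "(\<lambda>n. norm (infsum (\<lambda>k. norm (F n k)) UNIV)) summable_on UNIV"
    by (simp add: i1)
  have "(\<lambda>p. norm (case p of (n,k) \<Rightarrow> F n k)) summable_on Sigma UNIV (\<lambda>_. UNIV)"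
    apply (rule iffD2[OF Infinite_Sum.abs_summable_on_Sigma_iff[where f="\<lambda>p. case p of (n,k) \<Rightarrow> F n k" and A=UNIV and B="\<lambda>_. UNIV"]])
    apply (intro conjI ballI)
    using s1 s2 by simp_all
  then have "(\<lambda>p. case p of (n,k) \<Rightarrow> F n k) summable_on UNIV \<times> UNIV"
    by (rule abs_summable_summable)
  from infsum_swap_banach[OF this]
  have "infsum (\<lambda>n. infsum (\<lambda>k. F n k) UNIV) UNIV = infsum (\<lambda>k. infsum (\<lambda>n. F n k) UNIV) UNIV" .
  also have "(\<lambda>n. infsum (\<lambda>k. F n k) UNIV) = (\<lambda>n. \<Sum>k. F n k)"
    by (rule ext, rule infsum_nat_suminf[OF a1])
  also have "(\<lambda>k. infsum (\<lambda>n. F n k) UNIV) = (\<lambda>k. \<Sum>n. F n k)"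
    by (rule ext, rule infsum_nat_suminf[OF a3])
  also have "infsum (\<lambda>n. \<Sum>k. F n k) UNIV = (\<Sum>n. \<Sum>k. F n k)"
    by (rule infsum_nat_suminf[OF a5])
  also have "infsum (\<lambda>k. \<Sum>n. F n k) UNIV = (\<Sum>k. \<Sum>n. F n k)"
    by (rule infsum_nat_suminf[OF a4])
  finally show ?thesis .
qed

lemma hbound:
  fixes \<mu> :: "nat \<Rightarrow> real"
  assumes pos: "\<And>n. \<mu> n > 0" and dec: "decseq \<mu>" and sm: "summable \<mu>"
    and aM: "\<And>n. norm (a n) \<le> M"
  shows "summable (\<lambda>n. norm (complex_of_real (\<mu> (n + k)) * a n))"
    and "norm (Hmu \<mu> a k) \<le> M * (\<Sum>n. \<mu> (n + k))"
proof -
  have sk: "summable (\<lambda>n. \<mu> (n + k))" using summable_ignore_initial_segment[OF sm] .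
  have le: "norm (complex_of_real (\<mu> (n + k)) * a n) \<le> \<mu> (n + k) * M" for n
    using aM[of n] pos[of "n+k"] by (simp add: norm_mult mult_left_mono less_imp_le)
  have s2: "summable (\<lambda>n. \<mu> (n + k) * M)" by (intro summable_mult2 sk)
  show s: "summable (\<lambda>n. norm (complex_of_real (\<mu> (n + k)) * a n))"
    by (rule summable_comparison_test'[where N=0, OF s2]) (use le in auto)
  have "norm (Hmu \<mu> a k) \<le> (\<Sum>n. norm (complex_of_real (\<mu> (n + k)) * a n))"
    unfolding Hmu_def by (rule summable_norm[OF s])
  also have "\<dots> \<le> (\<Sum>n. \<mu> (n + k) * M)" by (intro suminf_le s s2 le)
  also have "\<dots> = (\<Sum>n. \<mu> (n + k)) * M" by (rule suminf_mult2[symmetric, OF sk])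
  finally show "norm (Hmu \<mu> a k) \<le> M * (\<Sum>n. \<mu> (n + k))" by (simp add: mult.commute)
qed

lemma tail_facts:
  fixes \<mu> :: "nat \<Rightarrow> real"
  assumes pos: "\<And>n. \<mu> n > 0" and dec: "decseq \<mu>" and sm: "summable \<mu>"
  shows "(\<Sum>n. \<mu> (n + k)) \<le> suminf \<mu>" and "(\<lambda>k. \<Sum>n. \<mu> (n + k)) \<longlonglongrightarrow> 0"
    and "0 \<le> (\<Sum>n. \<mu> (n + k))"
proof -
  have sk: "summable (\<lambda>n. \<mu> (n + k))" for k using summable_ignore_initial_segment[OF sm] .
  show "(\<Sum>n. \<mu> (n + k)) \<le> suminf \<mu>"
    by (intro suminf_le sk sm) (use dec in \<open>auto simp: decseq_def\<close>)
  show "0 \<le> (\<Sum>n. \<mu> (n + k))" by (intro suminf_nonneg sk) (use pos in \<open>auto intro: less_imp_le\<close>)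
  have "(\<lambda>k. suminf \<mu> - (\<Sum>i<k. \<mu> i)) \<longlonglongrightarrow> suminf \<mu> - suminf \<mu>"
    by (intro tendsto_diff tendsto_const summable_LIMSEQ sm)
  then show "(\<lambda>k. \<Sum>n. \<mu> (n + k)) \<longlonglongrightarrow> 0"
    by (simp add: suminf_minus_initial_segment[OF sm])
qed

lemma H_nuclear:
  fixes \<mu> :: "nat \<Rightarrow> real"
  assumes pos: "\<And>n. \<mu> n > 0" and dec: "decseq \<mu>" and sm: "summable \<mu>"
  shows "nuclear_ell1 (Hmu \<mu>)"
proof (rule nuclear_rows[where r="\<lambda>k n. complex_of_real (\<mu> (n + k))"])
  have b: "norm (complex_of_real (\<mu> (n + k))) \<le> \<mu> k" for n k
    using pos[of "n+k"] dec by (auto simp: decseq_def)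
  show r: "(\<lambda>n. complex_of_real (\<mu> (n + k))) \<in> ellinf" for k by (rule ellinfI, rule b)
  have "norm (norminf (\<lambda>n. complex_of_real (\<mu> (n + k)))) \<le> \<mu> k" for k
    using norminf_nonneg[OF r[of k]] norminf_le[OF b[of _ k]] by simp
  then show "summable (\<lambda>k. norminf (\<lambda>n. complex_of_real (\<mu> (n + k))))"
    by (intro summable_comparison_test'[where N=0, OF sm]) auto
  show "Hmu \<mu> x k = pairing x (\<lambda>n. complex_of_real (\<mu> (n + k)))" for x k
    by (simp add: Hmu_def pairing_def mult.commute)
qed

lemma C_nuclear:
  fixes \<mu> :: "nat \<Rightarrow> real"
  assumes pos: "\<And>n. \<mu> n > 0" and dec: "decseq \<mu>" and sm: "summable \<mu>"
  shows "nuclear_ell1 (Cmu \<mu>)"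
proof (rule nuclear_rows[where r="\<lambda>k n. if n \<le> k then complex_of_real (\<mu> k) else 0"])
  have b: "norm (if n \<le> k then complex_of_real (\<mu> k) else 0) \<le> \<mu> k" for n k
    using pos[of k] by auto
  show r: "(\<lambda>n. if n \<le> k then complex_of_real (\<mu> k) else 0) \<in> ellinf" for k by (rule ellinfI, rule b)
  have "norm (norminf (\<lambda>n. if n \<le> k then complex_of_real (\<mu> k) else 0)) \<le> \<mu> k" for k
    using norminf_nonneg[OF r[of k]] norminf_le[OF b[of _ k]] by simp
  then show "summable (\<lambda>k. norminf (\<lambda>n. if n \<le> k then complex_of_real (\<mu> k) else 0))"
    by (intro summable_comparison_test'[where N=0, OF sm]) auto
  show "Cmu \<mu> x k = pairing x (\<lambda>n. if n \<le> k then complex_of_real (\<mu> k) else 0)" for x k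
  proof -
    have "pairing x (\<lambda>n. if n \<le> k then complex_of_real (\<mu> k) else 0) =
        (\<Sum>n\<in>{..k}. x n * (if n \<le> k then complex_of_real (\<mu> k) else 0))"
      unfolding pairing_def by (rule suminf_finite) auto
    also have "\<dots> = (\<Sum>n\<in>{..k}. x n * complex_of_real (\<mu> k))" by (rule sum.cong) auto
    also have "\<dots> = Cmu \<mu> x k" by (simp add: Cmu_def sum_distrib_left mult.commute)
    finally show ?thesis by simp
  qed
qed

lemma H_dual:
  fixes \<mu> :: "nat \<Rightarrow> real"
  assumes pos: "\<And>n. \<mu> n > 0" and dec: "decseq \<mu>" and sm: "summable \<mu>"
    and x: "x \<in> ell1" and a: "a \<in> ellinf"
  shows "pairing (Hmu \<mu> x) a = pairing x (Hmu \<mu> a)"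
proof -
  define M where "M = norminf a"
  have aM: "norm (a n) \<le> M" for n unfolding M_def by (rule ellinf_le[OF a])
  have M0: "0 \<le> M" unfolding M_def by (rule norminf_nonneg[OF a])
  have sx: "summable (\<lambda>n. norm (x n))" using x by (simp add: ell1_def)
  define F where "F = (\<lambda>n k. x n * (complex_of_real (\<mu> (n + k)) * a k))"
  define S where "S = suminf \<mu>"
  have hs: "summable (\<lambda>k. norm (complex_of_real (\<mu> (k + n)) * a k))" for n
    using hbound(1)[OF pos dec sm aM] .
  have hb: "norm (Hmu \<mu> a n) \<le> M * S" for n
    using hbound(2)[OF pos dec sm aM, where k=n] tail_facts(1)[OF pos dec sm, where k=n] M0
    unfolding S_def by (meson mult_left_mono order_trans)
  have nF: "norm (F n k) = norm (x n) * norm (complex_of_real (\<mu> (k + n)) * a k)" for n k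
    by (simp add: F_def norm_mult add.commute)
  have a1: "summable (\<lambda>k. norm (F n k))" for n
    unfolding nF by (intro summable_mult hs)
  have tb: "(\<Sum>k. norm (complex_of_real (\<mu> (k + n)) * a k)) \<le> M * S" for n
  proof -
    have "(\<Sum>k. norm (complex_of_real (\<mu> (k + n)) * a k)) \<le> (\<Sum>k. \<mu> (k + n) * M)"
      using pos dec aM M0 summable_ignore_initial_segment[OF sm, of n]
      by (intro suminf_le hs summable_mult2) (auto simp: norm_mult mult_left_mono less_imp_le)
    also have "\<dots> = (\<Sum>k. \<mu> (k + n)) * M"
      by (rule suminf_mult2[symmetric, OF summable_ignore_initial_segment[OF sm]])
    also have "\<dots> \<le> S * M" unfolding S_def
      using tail_facts(1)[OF pos dec sm, where k=n] M0 by (intro mult_right_mono) auto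
    finally show ?thesis by (simp add: mult.commute)
  qed
  have a2: "summable (\<lambda>n. \<Sum>k. norm (F n k))"
  proof (rule summable_comparison_test'[where N=0, OF summable_mult2[OF sx, of "M * S"]])
    fix n
    have "(\<Sum>k. norm (F n k)) = norm (x n) * (\<Sum>k. norm (complex_of_real (\<mu> (k + n)) * a k))"
      unfolding nF by (rule suminf_mult[OF hs])
    also have "\<dots> \<le> norm (x n) * (M * S)" by (intro mult_left_mono tb) auto
    finally show "norm (\<Sum>k. norm (F n k)) \<le> norm (x n) * (M * S)"
      using suminf_nonneg[OF a1[of n]] by simp
  qed
  have a3: "summable (\<lambda>n. norm (F n k))" for k
  proof (rule summable_comparison_test'[where N=0, OF summable_mult2[OF sx, of "\<mu> 0 * M"]])
    fix n
    have "\<mu> (n + k) \<le> \<mu> 0" using dec by (auto simp: decseq_def)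
    then show "norm (norm (F n k)) \<le> norm (x n) * (\<mu> 0 * M)"
      using pos[of "n+k"] aM[of k] M0
      by (auto simp: F_def norm_mult intro!: mult_left_mono mult_mono)
  qed
  have sF: "(\<Sum>n. F n k) = pairing x (\<lambda>n. complex_of_real (\<mu> (n + k)) * a k)" for k
    by (simp add: F_def pairing_def)
  have a4: "summable (\<lambda>k. norm (\<Sum>n. F n k))"
  proof (rule summable_comparison_test'[where N=0, OF summable_mult2[OF sm, of "M * norm1 x"]])
    fix k
    have hb': "norm (complex_of_real (\<mu> (n + k)) * a k) \<le> \<mu> k * M" for n
    proof -
      have "\<mu> (n + k) \<le> \<mu> k" using dec by (auto simp: decseq_def)
      then show ?thesis using pos[of "n+k"] aM[of k] M0
        by (auto simp: norm_mult intro!: mult_mono)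
    qed
    have "norm (pairing x (\<lambda>n. complex_of_real (\<mu> (n + k)) * a k)) \<le> \<mu> k * M * norm1 x"
      by (rule pair_bound[OF x hb'])
    then show "norm (norm (\<Sum>n. F n k)) \<le> \<mu> k * (M * norm1 x)" unfolding sF by simp
  qed
  have a5: "summable (\<lambda>n. norm (\<Sum>k. F n k))"
  proof (rule summable_comparison_test'[where N=0, OF a2])
    fix n show "norm (norm (\<Sum>k. F n k)) \<le> (\<Sum>k. norm (F n k))"
      using summable_norm[OF a1[of n]] by simp
  qed
  have sw: "(\<Sum>n. \<Sum>k. F n k) = (\<Sum>k. \<Sum>n. F n k)" by (rule suminf_swap_nat[OF a1 a2 a3 a4 a5])
  have hsx: "summable (\<lambda>n. complex_of_real (\<mu> (n + k)) * x n)" for k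
  proof (rule summable_comparison_test'[where N=0, OF summable_mult2[OF sx, of "\<mu> 0"]])
    fix n
    have le: "\<mu> (n + k) \<le> \<mu> 0" using dec by (auto simp: decseq_def)
    show "norm (complex_of_real (\<mu> (n + k)) * x n) \<le> norm (x n) * \<mu> 0"
      using pos[of "n+k"] mult_left_mono[OF le norm_ge_zero[of "x n"]] by (simp add: norm_mult mult.commute)
  qed
  have "pairing (Hmu \<mu> x) a = (\<Sum>k. \<Sum>n. complex_of_real (\<mu> (n + k)) * x n * a k)"
    unfolding pairing_def Hmu_def by (simp add: suminf_mult2[OF hsx])
  also have "\<dots> = (\<Sum>k. \<Sum>n. F n k)" by (simp add: F_def mult_ac)
  also have "\<dots> = (\<Sum>n. \<Sum>k. F n k)" by (rule sw[symmetric])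
  also have "\<dots> = pairing x (Hmu \<mu> a)"
    unfolding pairing_def Hmu_def F_def
  proof (rule arg_cong[where f=suminf], rule ext)
    fix n
    show "(\<Sum>k. x n * (complex_of_real (\<mu> (n + k)) * a k)) = x n * (\<Sum>k. complex_of_real (\<mu> (k + n)) * a k)"
      by (subst suminf_mult[OF summable_norm_cancel[OF hbound(1)[OF pos dec sm aM, where k=n]], symmetric])
        (simp add: add.commute)
  qed
  finally show ?thesis .
qed

lemma H_compact:
  fixes \<mu> :: "nat \<Rightarrow> real"
  assumes pos: "\<And>n. \<mu> n > 0" and dec: "decseq \<mu>" and sm: "summable \<mu>"
  shows "compact_ellinf (Hmu \<mu>)"
  unfolding compact_ellinf_def
proof (intro conjI ballI allI impI)
  define t where "t = (\<lambda>k. \<Sum>n. \<mu> (n + k))"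
  have t0: "0 \<le> t k" for k unfolding t_def by (rule tail_facts(3)[OF pos dec sm])
  have tS: "t k \<le> suminf \<mu>" for k unfolding t_def by (rule tail_facts(1)[OF pos dec sm])
  have tl: "t \<longlonglongrightarrow> 0" unfolding t_def by (rule tail_facts(2)[OF pos dec sm])
  have HB: "norm (Hmu \<mu> a k) \<le> norminf a * t k" if "a \<in> ellinf" for a k
    unfolding t_def by (rule hbound(2)[OF pos dec sm ellinf_le[OF that]])
  have HS: "summable (\<lambda>n. complex_of_real (\<mu> (n + k)) * a n)" if "a \<in> ellinf" for a k
    by (rule summable_norm_cancel[OF hbound(1)[OF pos dec sm ellinf_le[OF that]]])
  show "Hmu \<mu> a \<in> ellinf" if a: "a \<in> ellinf" for a
  proof (rule ellinfI)
    fix k show "norm (Hmu \<mu> a k) \<le> norminf a * suminf \<mu>"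
      using HB[OF a, of k] tS[of k] norminf_nonneg[OF a]
      by (meson mult_left_mono order_trans)
  qed
  fix a b c assume a: "a \<in> ellinf" and b: "b \<in> ellinf"
  show "Hmu \<mu> (\<lambda>k. a k + b k) = (\<lambda>k. Hmu \<mu> a k + Hmu \<mu> b k)"
    unfolding Hmu_def
    by (rule ext, subst suminf_add[OF HS[OF a] HS[OF b]]) (simp add: distrib_left)
  show "Hmu \<mu> (\<lambda>k. c * a k) = (\<lambda>k. c * Hmu \<mu> a k)"
    unfolding Hmu_def
    by (rule ext, subst suminf_mult[OF HS[OF a], symmetric]) (simp add: mult_ac)
next
  define t where "t = (\<lambda>k. \<Sum>n. \<mu> (n + k))"
  have t0: "0 \<le> t k" for k unfolding t_def by (rule tail_facts(3)[OF pos dec sm])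
  have tS: "t k \<le> suminf \<mu>" for k unfolding t_def by (rule tail_facts(1)[OF pos dec sm])
  have tl: "t \<longlonglongrightarrow> 0" unfolding t_def by (rule tail_facts(2)[OF pos dec sm])
  fix x :: "nat \<Rightarrow> nat \<Rightarrow> complex"
  assume xa: "\<forall>n. x n \<in> ellinf \<and> norminf (x n) \<le> 1"
  have x1: "norm (x n m) \<le> 1" for n m using xa ellinf_le[of "x n" m] by (meson order_trans)
  define f where "f = (\<lambda>n k. Hmu \<mu> (x n) k)"
  have fb: "norm (f n k) \<le> t k" for n k
    using hbound(2)[OF pos dec sm x1, where k=k] unfolding f_def t_def by simp
  obtain r y where r: "strict_mono r" and yb: "\<And>k. norm (y k) \<le> t k"
    and yl: "\<And>k. (\<lambda>n. f (r n) k) \<longlonglongrightarrow> y k"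
    using subseq_pointwise[of f t] fb by blast
  have y: "y \<in> ellinf" by (rule ellinfI[where M="suminf \<mu>"]) (use yb tS in \<open>meson order_trans\<close>)
  have "(\<lambda>n. norminf (\<lambda>k. Hmu \<mu> (x (r n)) k - y k)) \<longlonglongrightarrow> 0"
  proof (rule LIMSEQ_I)
    fix e :: real assume e: "0 < e"
    obtain K where K: "\<And>k. k \<ge> K \<Longrightarrow> norm (t k - 0) < e / 4"
      using LIMSEQ_D[OF tl, of "e/4"] e by auto
    have "\<forall>k\<in>{..<K}. eventually (\<lambda>n. norm (f (r n) k - y k) < e / 4) sequentially"
    proof
      fix k
      have "eventually (\<lambda>n. dist (f (r n) k) (y k) < e / 4) sequentially"
        using yl[of k] e unfolding tendsto_iff by (meson divide_pos_pos zero_less_numeral)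
      then show "eventually (\<lambda>n. norm (f (r n) k - y k) < e / 4) sequentially"
        by (simp add: dist_norm)
    qed
    then have "eventually (\<lambda>n. \<forall>k\<in>{..<K}. norm (f (r n) k - y k) < e / 4) sequentially"
      by (rule eventually_ball_finite[rotated]) auto
    then obtain N where N: "\<And>n k. n \<ge> N \<Longrightarrow> k < K \<Longrightarrow> norm (f (r n) k - y k) < e / 4"
      unfolding eventually_sequentially by auto
    show "\<exists>no. \<forall>n\<ge>no. norm (norminf (\<lambda>k. Hmu \<mu> (x (r n)) k - y k) - 0) < e"
    proof (intro exI allI impI)
      fix n assume n: "n \<ge> N"
      have pk: "norm (Hmu \<mu> (x (r n)) k - y k) \<le> e / 2" for k
      proof (cases "k < K")
        case True then show ?thesis using N[OF n True] norm_ge_zero[of "Hmu \<mu> (x (r n)) k - y k"] unfolding f_def by linarith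
      next
        case False
        then have "t k < e / 4" using K[of k] t0[of k] by simp
        moreover have "norm (Hmu \<mu> (x (r n)) k - y k) \<le> t k + t k"
          using norm_triangle_ineq4[of "Hmu \<mu> (x (r n)) k" "y k"] fb[of "r n" k] yb[of k]
          by (simp add: f_def)
        ultimately show ?thesis by simp
      qed
      have d: "(\<lambda>k. Hmu \<mu> (x (r n)) k - y k) \<in> ellinf" by (rule ellinfI, rule pk)
      have "0 \<le> norminf (\<lambda>k. Hmu \<mu> (x (r n)) k - y k)" by (rule norminf_nonneg[OF d])
      moreover have "norminf (\<lambda>k. Hmu \<mu> (x (r n)) k - y k) \<le> e / 2" by (rule norminf_le, rule pk)
      ultimately show "norm (norminf (\<lambda>k. Hmu \<mu> (x (r n)) k - y k) - 0) < e" using e by simp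
    qed
  qed
  then show "\<exists>r y. strict_mono r \<and> y \<in> ellinf \<and>
          (\<lambda>n. norminf (\<lambda>k. Hmu \<mu> (x (r n)) k - y k)) \<longlonglongrightarrow> 0"
    using r y by blast
qed

theorem proposition29:
  fixes \<mu> :: "nat \<Rightarrow> real"
  assumes "\<And>n. \<mu> n > 0"
    and "decseq \<mu>"
    and "summable \<mu>"
  shows "nuclear_ell1 (Hmu \<mu>) \<and> nuclear_ell1 (Cmu \<mu>) \<and>
    (\<forall>a\<in>ellinf. Hmu \<mu> a \<in> ellinf \<and>
           (\<forall>x\<in>ell1. pairing (Hmu \<mu> x) a = pairing x (Hmu \<mu> a))) \<and>
    compact_ellinf (Hmu \<mu>)"
  using H_nuclear[OF assms] C_nuclear[OF assms] H_dual[OF assms] H_compact[OF assms]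
  unfolding compact_ellinf_def by blast

end
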